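(* Let $R$ be a commutative ring which is free as an abelian group with $\mathbb{Z}$-basis $V$, let $n\ge2$ and $p$ a prime, and write $\Gamma_m=\Gamma(SL_n(R),p^m)$. Suppose $|V|<\infty$ or $s=1$. Then for all $r\ge s\ge1$, $$\Gamma_r/\Gamma_{r+s}\cong\bigoplus_{n^2-1}\mathbb{Z}/p^s\mathbb{Z}[V].$$
   Context: $\Gamma(SL_n(R),p^m)=\ker\big(SL_n(R)\to SL_n(R\otimes_{\mathbb{Z}}\mathbb{Z}/p^m)\big)$. $\mathbb{Z}/p^s\mathbb{Z}[V]$ denotes the free $\mathbb{Z}/p^s$-module with basis $V$ (equivalently the additive group of $R/p^sR$); the right-hand side is a direct sum of $n^2-1$ copies of it. *)

theory Defs
  imports "HOL-Analysis.Analysis" "HOL-Algebra.Coset" "HOL-Algebra.Product_Groups"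
    "HOL-Algebra.Elementary_Groups"
begin

definition Z_basis :: "'a::comm_ring_1 set \<Rightarrow> bool" where
  "Z_basis V \<longleftrightarrow>
     (\<forall>x. \<exists>c :: 'a \<Rightarrow> int. finite {v\<in>V. c v \<noteq> 0} \<and>
            x = (\<Sum>v\<in>{v\<in>V. c v \<noteq> 0}. of_int (c v) * v)) \<and>
     (\<forall>(c :: 'a \<Rightarrow> int) F. finite F \<and> F \<subseteq> V \<and> (\<Sum>v\<in>F. of_int (c v) * v) = 0
            \<longrightarrow> (\<forall>v\<in>F. c v = 0))"

definition SL :: "('a::comm_ring_1 ^'n::finite^'n) monoid" where
  "SL = \<lparr>carrier = {A. det A = 1}, monoid.mult = (**), one = mat 1\<rparr>"

text \<open>Principal congruence subgroup Gamma(SL_n(R), p^m): kernel of reduction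
  SL_n(R) \<rightarrow> SL_n(R/p^m R), i.e. matrices congruent to the identity mod p^m R.\<close>
definition cong_sub :: "nat \<Rightarrow> nat \<Rightarrow> ('a::comm_ring_1 ^'n::finite^'n) set" where
  "cong_sub p m = {A \<in> carrier SL. \<forall>i j. \<exists>b. A$i$j - (mat 1 :: 'a^'n^'n)$i$j = of_nat (p^m) * b}"

text \<open>Free Z/q-module with basis V, as an abelian group.\<close>
definition free_mod_group :: "nat \<Rightarrow> 'b set \<Rightarrow> ('b \<Rightarrow> int) monoid" where
  "free_mod_group q V = sum_group V (\<lambda>_. integer_mod_group q)"

end

theory Submission imports Defs begin

definition coef :: "'a::comm_ring_1 set \<Rightarrow> 'a \<Rightarrow> 'a \<Rightarrow> int" where
  "coef V x v = (if v \<in> V then (SOME c. finite {v\<in>V. c v \<noteq> 0} \<and>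
            x = (\<Sum>v\<in>{v\<in>V. c v \<noteq> 0}. of_int (c v) * v)) v else 0)"

lemma coef_repr:
  assumes "Z_basis V"
  shows "finite {v. coef V x v \<noteq> 0} \<and> {v. coef V x v \<noteq> 0} \<subseteq> V \<and>
         x = (\<Sum>v\<in>{v. coef V x v \<noteq> 0}. of_int (coef V x v) * v)"
proof -
  let ?P = "\<lambda>c. finite {v\<in>V. c v \<noteq> 0} \<and> x = (\<Sum>v\<in>{v\<in>V. c v \<noteq> 0}. of_int (c v) * v)"
  have "\<exists>c. ?P c" using assms unfolding Z_basis_def by blast
  then have P: "?P (SOME c. ?P c)" by (rule someI_ex)
  have eq: "{v. coef V x v \<noteq> 0} = {v\<in>V. (SOME c. ?P c) v \<noteq> 0}"
    by (auto simp: coef_def)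
  have eq2: "\<And>v. v \<in> {v\<in>V. (SOME c. ?P c) v \<noteq> 0} \<Longrightarrow> coef V x v = (SOME c. ?P c) v"
    by (auto simp: coef_def)
  show ?thesis using P unfolding eq by (auto simp: eq2)
qed

lemma basis_indep:
  assumes "Z_basis V" "finite F" "F \<subseteq> V"
    and "(\<Sum>v\<in>F. of_int (c v) * v) = (\<Sum>v\<in>F. of_int (d v) * (v::'a::comm_ring_1))"
    and "v \<in> F"
  shows "c v = d v"
proof -
  have Z: "\<And>(c :: 'a \<Rightarrow> int) F. finite F \<Longrightarrow> F \<subseteq> V \<Longrightarrow> (\<Sum>v\<in>F. of_int (c v) * v) = 0
            \<Longrightarrow> (\<forall>v\<in>F. c v = 0)"
    using assms(1) unfolding Z_basis_def by blast
  have "(\<Sum>v\<in>F. of_int ((\<lambda>v. c v - d v) v) * v) = (\<Sum>v\<in>F. of_int (c v) * v - of_int (d v) * v)"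
    by (rule sum.cong) (auto simp: algebra_simps)
  also have "\<dots> = 0" using assms(4) by (simp only: sum_subtractf) simp
  finally have "\<forall>v\<in>F. c v - d v = 0"
    using Z[OF assms(2,3), of "\<lambda>v. c v - d v"] by simp
  then show ?thesis using assms(5) by auto
qed

lemma coef_unique:
  assumes "Z_basis V" "finite F" "F \<subseteq> V"
    and x: "x = (\<Sum>v\<in>F. of_int (c v) * (v::'a::comm_ring_1))"
  shows "coef V x v = (if v \<in> F then c v else 0)"
proof -
  let ?P = "{v. coef V x v \<noteq> 0}"
  have R1: "finite ?P" and R2: "?P \<subseteq> V" and R3: "x = (\<Sum>v\<in>?P. of_int (coef V x v) * v)"
    using coef_repr[OF assms(1), of x] by blast+
  let ?G = "F \<union> ?P"
  have G: "finite ?G" "?G \<subseteq> V" using R1 R2 assms(2,3) by auto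
  define c' where "c' v = (if v \<in> F then c v else 0)" for v
  have e1: "x = (\<Sum>v\<in>?G. of_int (coef V x v) * v)"
  proof -
    have "(\<Sum>v\<in>?G. of_int (coef V x v) * v) = (\<Sum>v\<in>?P. of_int (coef V x v) * v)"
      by (rule sum.mono_neutral_right) (use G in auto)
    then show ?thesis using R3 by (rule ssubst[where P="\<lambda>z. x = z"])
  qed
  have e2: "x = (\<Sum>v\<in>?G. of_int (c' v) * v)"
  proof -
    have "(\<Sum>v\<in>?G. of_int (c' v) * v) = (\<Sum>v\<in>F. of_int (c' v) * v)"
      by (rule sum.mono_neutral_right) (use G in \<open>auto simp: c'_def\<close>)
    also have "\<dots> = (\<Sum>v\<in>F. of_int (c v) * v)" by (rule sum.cong) (auto simp: c'_def)
    finally show ?thesis using x by simp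
  qed
  have "\<forall>v\<in>?G. coef V x v = c' v"
  proof
    fix v assume "v \<in> ?G"
    have "(\<Sum>v\<in>?G. of_int (coef V x v) * v) = (\<Sum>v\<in>?G. of_int (c' v) * v)"
      using e1 e2 by (rule trans[OF sym])
    then show "coef V x v = c' v" using basis_indep[OF assms(1) G, of "coef V x" c' v] \<open>v \<in> ?G\<close> by blast
  qed
  then have A: "v \<in> ?G \<Longrightarrow> coef V x v = c' v" by blast
  show ?thesis
  proof (cases "v \<in> ?G")
    case True
    show ?thesis using A[OF True] by (simp add: c'_def)
  next
    case False
    then have "v \<notin> F" "coef V x v = 0" by blast+
    then show ?thesis by (simp only: if_False)
  qed
qed


lemma coef_ext:
  assumes "Z_basis V" "finite F" "{v. coef V x v \<noteq> 0} \<subseteq> F"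
  shows "x = (\<Sum>v\<in>F. of_int (coef V x v) * (v::'a::comm_ring_1))"
proof -
  let ?P = "{v. coef V x v \<noteq> 0}"
  have R3: "x = (\<Sum>v\<in>?P. of_int (coef V x v) * v)"
    using coef_repr[OF assms(1), of x] by blast
  have "(\<Sum>v\<in>F. of_int (coef V x v) * v) = (\<Sum>v\<in>?P. of_int (coef V x v) * v)"
    by (rule sum.mono_neutral_right) (use assms in auto)
  then show ?thesis using R3 by (rule ssubst[where P="\<lambda>z. x = z"])
qed

lemma coef_subset: "Z_basis V \<Longrightarrow> {v. coef V x v \<noteq> 0} \<subseteq> V"
  "Z_basis V \<Longrightarrow> finite {v. coef V x v \<noteq> 0}"
  using coef_repr[of V x] by blast+

lemma coef_lin:
  assumes "Z_basis V"
  shows "coef V (of_int a * x + of_int b * y) v = a * coef V x v + b * coef V (y::'a::comm_ring_1) v"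
proof -
  let ?F = "{v. coef V x v \<noteq> 0} \<union> {v. coef V y v \<noteq> 0}"
  have F: "finite ?F" "?F \<subseteq> V" using coef_subset[OF assms] by auto
  have ex: "x = (\<Sum>v\<in>?F. of_int (coef V x v) * v)"
    by (rule coef_ext[OF assms F(1)]) blast
  have ey: "y = (\<Sum>v\<in>?F. of_int (coef V y v) * v)"
    by (rule coef_ext[OF assms F(1)]) blast
  have "of_int a * x + of_int b * y = of_int a * (\<Sum>v\<in>?F. of_int (coef V x v) * v) + of_int b * (\<Sum>v\<in>?F. of_int (coef V y v) * v)"
    using ex ey by (rule arg_cong2[where f="\<lambda>u w. of_int a * u + of_int b * w"])
  also have "\<dots> = (\<Sum>v\<in>?F. of_int (a * coef V x v + b * coef V y v) * v)"
    by (simp add: sum_distrib_left sum.distrib algebra_simps)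
  finally have e: "of_int a * x + of_int b * y = (\<Sum>v\<in>?F. of_int (a * coef V x v + b * coef V y v) * v)" .
  show ?thesis
    using coef_unique[OF assms F e, of v] by auto
qed

lemma coef_add: "Z_basis V \<Longrightarrow> coef V (x + y) v = coef V x v + coef V (y::'a::comm_ring_1) v"
  using coef_lin[of V 1 x 1 y v] by simp

lemma coef_smult: "Z_basis V \<Longrightarrow> coef V (of_int a * x) v = a * coef V (x::'a::comm_ring_1) v"
  using coef_lin[of V a x 0 0 v] by simp

lemma coef_zero: "Z_basis V \<Longrightarrow> coef V (0::'a::comm_ring_1) v = 0"
  using coef_unique[of V "{}" 0 "\<lambda>_. 0" v] by simp

lemma coef_nat_mult: "Z_basis V \<Longrightarrow> coef V (of_nat k * x) v = int k * coef V (x::'a::comm_ring_1) v"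
  using coef_smult[of V "int k" x v] by simp

lemma coef_eq0: assumes "Z_basis V" "\<And>v. coef V x v = 0" shows "x = (0::'a::comm_ring_1)"
proof -
  have "x = (\<Sum>v\<in>{}. of_int (coef V x v) * v)"
    by (rule coef_ext[OF assms(1)]) (use assms(2) in auto)
  then show ?thesis by simp
qed

lemma torsion_free:
  assumes "Z_basis (V::'a::comm_ring_1 set)" "k \<noteq> 0" "of_nat k * x = (0::'a::comm_ring_1)"
  shows "x = 0"
proof (rule coef_eq0[OF assms(1)])
  fix v
  have "int k * coef V x v = 0"
    using coef_nat_mult[OF assms(1), of k x v] assms(3) coef_zero[OF assms(1)] by simp
  then show "coef V x v = 0" using assms(2) by simp
qed

lemma cancel_nat:
  assumes "Z_basis (V::'a::comm_ring_1 set)" "k \<noteq> 0" "of_nat k * x = of_nat k * (y::'a::comm_ring_1)"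
  shows "x = y"
proof -
  have "of_nat k * (x - y) = 0" using assms(3) by (simp add: right_diff_distrib)
  then have "x - y = 0" by (rule torsion_free[OF assms(1,2)])
  then show ?thesis by simp
qed

lemma div_iff:
  assumes "Z_basis V"
  shows "(\<exists>b. x = of_nat q * b) \<longleftrightarrow> (\<forall>v. int q dvd coef V (x::'a::comm_ring_1) v)"
proof
  assume "\<exists>b. x = of_nat q * b"
  then obtain b where "x = of_nat q * b" by blast
  then show "\<forall>v. int q dvd coef V x v" using coef_nat_mult[OF assms] by simp
next
  assume d: "\<forall>v. int q dvd coef V x v"
  let ?P = "{v. coef V x v \<noteq> 0}"
  have "x = (\<Sum>v\<in>?P. of_int (coef V x v) * v)"
    by (rule coef_ext[OF assms]) (use coef_subset[OF assms] in auto)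
  also have "\<dots> = (\<Sum>v\<in>?P. of_nat q * (of_int (coef V x v div int q) * v))"
  proof (rule sum.cong[OF refl])
    fix v
    have "coef V x v = int q * (coef V x v div int q)" using d by simp
    then have "(of_int (coef V x v) :: 'a) = of_int (int q * (coef V x v div int q))" by (rule arg_cong)
    then show "of_int (coef V x v) * v = of_nat q * (of_int (coef V x v div int q) * v)"
      by (simp add: mult.assoc)
  qed
  also have "\<dots> = of_nat q * (\<Sum>v\<in>?P. of_int (coef V x v div int q) * v)"
    by (simp add: sum_distrib_left)
  finally show "\<exists>b. x = of_nat q * b" by blast
qed


section \<open>Determinant facts\<close>

lemma prod_pert:
  assumes "finite F"
  shows "\<exists>c. (\<Prod>i\<in>F. a i + t * b i) = (\<Prod>i\<in>F. a i) + t * (c::'a::comm_ring_1)"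
  using assms
proof (induction F rule: finite_induct)
  case empty then show ?case by (auto intro: exI[of _ 0])
next
  case (insert x F)
  then obtain c where c: "(\<Prod>i\<in>F. a i + t * b i) = (\<Prod>i\<in>F. a i) + t * c" by blast
  have "(\<Prod>i\<in>insert x F. a i + t * b i) = (a x + t * b x) * ((\<Prod>i\<in>F. a i) + t * c)"
    using insert c by simp
  also have "\<dots> = (\<Prod>i\<in>insert x F. a i) + t * (b x * (\<Prod>i\<in>F. a i) + a x * c + t * b x * c)"
    using insert by (simp add: algebra_simps)
  finally show ?case by blast
qed

lemma det_pert:
  fixes A M N :: "'a::comm_ring_1^'n::finite^'n"
  assumes "\<And>i j. A$i$j = M$i$j + t * N$i$j"
  shows "\<exists>c. det A = det M + t * c"
proof -
  have "\<forall>p. \<exists>c. (\<Prod>i\<in>UNIV. A$i$p i) = (\<Prod>i\<in>UNIV. M$i$p i) + t * c"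
  proof
    fix p :: "'n \<Rightarrow> 'n"
    show "\<exists>c. (\<Prod>i\<in>UNIV. A$i$p i) = (\<Prod>i\<in>UNIV. M$i$p i) + t * c"
      using prod_pert[of "UNIV::'n set" "\<lambda>i. M$i$p i" t "\<lambda>i. N$i$p i"] by (simp add: assms)
  qed
  then obtain cf where cf: "\<And>p. (\<Prod>i\<in>UNIV. A$i$p i) = (\<Prod>i\<in>UNIV. M$i$p i) + t * cf p"
    by metis
  have "det A = (\<Sum>p\<in>{p. p permutes (UNIV::'n set)}. of_int (sign p) * ((\<Prod>i\<in>UNIV. M$i$p i) + t * cf p))"
    unfolding det_def by (simp add: cf)
  also have "\<dots> = det M + t * (\<Sum>p\<in>{p. p permutes (UNIV::'n set)}. of_int (sign p) * cf p)"
    unfolding det_def by (simp add: algebra_simps sum.distrib sum_distrib_left)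
  finally show ?thesis by blast
qed

lemma mat1_entry: "(mat 1 :: 'a::zero_neq_one^'n^'n)$i$j = (if i = j then 1 else 0)"
  by (simp add: mat_def)

lemma det_replace_row:
  fixes A :: "'a::comm_ring_1^'n::finite^'n"
  shows "det (\<chi> l. if l = k then row j A else row l A) = (if j = k then det A else 0)"
proof (cases "j = k")
  case True
  have "(\<chi> l. if l = k then row j A else row l A) = A"
    using True by (simp add: vec_eq_iff row_def)
  then show ?thesis using True by simp
next
  case False
  show ?thesis
    using det_identical_rows[of j k "(\<chi> l. if l = k then row j A else row l A)"] False
    by (simp add: row_def vec_eq_iff)
qed

definition adjm :: "'a::comm_ring_1^'n::finite^'n \<Rightarrow> 'a^'n^'n" where
  "adjm A = (\<chi> i k. det (\<chi> l. if l = k then axis i 1 else row l A))"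

lemma adjm_right: "(A ** adjm A) $ j $ k = (if j = k then det A else 0)"
proof -
  have "(A ** adjm A) $ j $ k = (\<Sum>i\<in>UNIV. A$j$i * det (\<chi> l. if l = k then axis i 1 else row l A))"
    by (simp add: matrix_matrix_mult_def adjm_def)
  also have "\<dots> = (\<Sum>i\<in>UNIV. det (\<chi> l. if l = k then A$j$i *s axis i 1 else row l A))"
    by (simp add: det_row_mul)
  also have "\<dots> = det (\<chi> l. if l = k then (\<Sum>i\<in>UNIV. A$j$i *s axis i 1) else row l A)"
    by (rule det_linear_row_sum[symmetric]) simp
  also have "(\<Sum>i\<in>UNIV. A$j$i *s axis i 1) = row j A"
    by (simp add: vec_eq_iff row_def sum_component axis_def vector_scalar_mult_def if_distrib cong: if_cong)
  finally show ?thesis by (simp add: det_replace_row)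
qed

lemma adjm_right_mat: "det A = 1 \<Longrightarrow> A ** adjm A = mat 1"
  by (simp add: vec_eq_iff adjm_right mat1_entry)

lemma SL_inverse:
  fixes A :: "'a::comm_ring_1^'n::finite^'n"
  assumes "det A = 1"
  shows "det (adjm A) = 1 \<and> adjm A ** A = mat 1 \<and> A ** adjm A = mat 1"
proof -
  have AB: "A ** adjm A = mat 1" by (rule adjm_right_mat[OF assms])
  have dB: "det (adjm A) = 1" using det_mul[of A "adjm A"] AB assms by simp
  have BC: "adjm A ** adjm (adjm A) = mat 1" by (rule adjm_right_mat[OF dB])
  have "A = A ** (adjm A ** adjm (adjm A))" using BC by simp
  also have "\<dots> = adjm (adjm A)" by (simp add: matrix_mul_assoc AB)
  finally have "adjm A ** A = mat 1" using BC by simp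
  then show ?thesis using AB dB by blast
qed

lemma SL_simps [simp]: "carrier SL = {A. det A = 1}" "monoid.mult SL A B = A ** B" "one SL = mat 1"
  by (simp_all add: SL_def)

lemma group_SL: "group (SL :: ('a::comm_ring_1^'n::finite^'n) monoid)"
proof (rule groupI)
  fix x y :: "'a^'n^'n"
  assume "x \<in> carrier SL" "y \<in> carrier SL"
  then show "x \<otimes>\<^bsub>SL\<^esub> y \<in> carrier SL" by (simp add: det_mul)
next
  show "\<one>\<^bsub>SL\<^esub> \<in> carrier (SL :: ('a^'n^'n) monoid)" by simp
next
  fix x y z :: "'a^'n^'n"
  show "x \<otimes>\<^bsub>SL\<^esub> y \<otimes>\<^bsub>SL\<^esub> z = x \<otimes>\<^bsub>SL\<^esub> (y \<otimes>\<^bsub>SL\<^esub> z)"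
    by (simp add: matrix_mul_assoc)
next
  fix x :: "'a^'n^'n"
  show "\<one>\<^bsub>SL\<^esub> \<otimes>\<^bsub>SL\<^esub> x = x" by simp
next
  fix x :: "'a^'n^'n"
  assume "x \<in> carrier SL"
  then show "\<exists>y\<in>carrier SL. y \<otimes>\<^bsub>SL\<^esub> x = \<one>\<^bsub>SL\<^esub>"
    using SL_inverse[of x] by auto
qed


section \<open>Congruence subgroups\<close>

lemma cong_sub_iff:
  "A \<in> cong_sub p m \<longleftrightarrow> det A = 1 \<and> (\<forall>i j. \<exists>b. A$i$j = (mat 1 :: 'a::comm_ring_1^'n::finite^'n)$i$j + of_nat (p^m) * b)"
  by (auto simp: cong_sub_def SL_def algebra_simps)

definition Xof :: "'a::comm_ring_1 \<Rightarrow> 'a^'n::finite^'n \<Rightarrow> 'n \<Rightarrow> 'n \<Rightarrow> 'a" where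
  "Xof t A i j = (SOME b. A$i$j = (mat 1 :: 'a^'n^'n)$i$j + t * b)"

lemma Xof:
  assumes "A \<in> cong_sub p m"
  shows "A$i$j = (mat 1 :: 'a::comm_ring_1^'n::finite^'n)$i$j + of_nat (p^m) * Xof (of_nat (p^m)) A i j"
proof -
  have "\<exists>b. A$i$j = (mat 1 :: 'a^'n^'n)$i$j + of_nat (p^m) * b" using assms cong_sub_iff by blast
  then show ?thesis unfolding Xof_def by (rule someI_ex)
qed

lemma Xof_unique:
  assumes "Z_basis (V::'a::comm_ring_1 set)" "p \<noteq> 0"
    and "A$i$j = (mat 1 :: 'a^'n::finite^'n)$i$j + of_nat (p^m) * b"
  shows "Xof (of_nat (p^m)) A i j = b"
proof -
  let ?P = "\<lambda>b. A$i$j = (mat 1 :: 'a^'n^'n)$i$j + of_nat (p^m) * b"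
  have "?P (SOME b. ?P b)" using assms(3) by (rule someI)
  then have "of_nat (p^m) * (SOME b. ?P b) = of_nat (p^m) * b" using assms(3) by simp
  then have "(SOME b. ?P b) = b" using cancel_nat[OF assms(1), of "p^m"] assms(2) by simp
  then show ?thesis unfolding Xof_def .
qed

lemma mult_pert:
  fixes A B :: "'a::comm_ring_1^'n::finite^'n"
  assumes "\<And>i j. A$i$j = (mat 1 :: 'a^'n^'n)$i$j + t * XA i j"
    and "\<And>i j. B$i$j = (mat 1 :: 'a^'n^'n)$i$j + t * XB i j"
  shows "(A ** B)$i$j = (mat 1 :: 'a^'n^'n)$i$j + t * (XA i j + XB i j + t * (\<Sum>k\<in>UNIV. XA i k * XB k j))"
proof -
  have "(A ** B)$i$j = (\<Sum>k\<in>UNIV. ((if i = k then 1 else 0) + t * XA i k) * ((if k = j then 1 else 0) + t * XB k j))"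
    by (simp add: matrix_matrix_mult_def assms mat1_entry)
  also have "\<dots> = (\<Sum>k\<in>UNIV. (if i = k then (if k = j then 1 else 0) + t * XB k j else 0)
       + (if k = j then t * XA i k else 0) + t * t * (XA i k * XB k j))"
    by (rule sum.cong) (auto simp: algebra_simps)
  also have "\<dots> = (\<Sum>k\<in>UNIV. (if i = k then (if k = j then 1 else 0) + t * XB k j else 0))
       + (\<Sum>k\<in>UNIV. (if k = j then t * XA i k else 0)) + (\<Sum>k\<in>UNIV. t * t * (XA i k * XB k j))"
    by (simp only: sum.distrib)
  also have "\<dots> = (if i = j then 1 else 0) + t * XB i j + t * XA i j + t * t * (\<Sum>k\<in>UNIV. XA i k * XB k j)"
  proof -
    have 1: "(\<Sum>k\<in>UNIV. (if i = k then (if k = j then 1 else 0) + t * XB k j else 0)) = (if i = j then 1 else 0) + t * XB i j"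
      by (subst sum.delta') simp_all
    have 2: "(\<Sum>k\<in>UNIV. (if k = j then t * XA i k else 0)) = t * XA i j"
      by (subst sum.delta) simp_all
    show ?thesis unfolding 1 2 by (simp add: sum_distrib_left)
  qed
  finally show ?thesis by (simp add: mat1_entry algebra_simps)
qed

lemma subgroup_cong_sub: "subgroup (cong_sub p m :: ('a::comm_ring_1^'n::finite^'n) set) SL"
proof -
  interpret G: group "SL :: ('a^'n^'n) monoid" by (rule group_SL)
  let ?t = "of_nat (p^m) :: 'a"
  show ?thesis
  proof (rule G.subgroupI)
    show "cong_sub p m \<subseteq> carrier (SL :: ('a^'n^'n) monoid)" by (auto simp: cong_sub_def)
  next
    have "mat 1 \<in> (cong_sub p m :: ('a^'n^'n) set)"
      by (simp add: cong_sub_iff) (metis add.right_neutral mult_zero_right)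
    then show "cong_sub p m \<noteq> ({} :: ('a^'n^'n) set)" by blast
  next
    fix A B :: "'a^'n^'n"
    assume A: "A \<in> cong_sub p m" and B: "B \<in> cong_sub p m"
    have dA: "det A = 1" and dB: "det B = 1" using A B by (auto simp: cong_sub_iff)
    have "\<forall>i j. \<exists>b. (A ** B)$i$j = (mat 1 :: 'a^'n^'n)$i$j + ?t * b"
      using mult_pert[OF Xof[OF A] Xof[OF B]] by blast
    then show "A \<otimes>\<^bsub>SL\<^esub> B \<in> cong_sub p m" using dA dB by (simp add: cong_sub_iff det_mul)
  next
    fix A :: "'a^'n^'n"
    assume A: "A \<in> cong_sub p m"
    have dA: "det A = 1" using A by (auto simp: cong_sub_iff)
    let ?B = "adjm A"
    have inv: "inv\<^bsub>SL\<^esub> A = ?B"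
      by (rule G.inv_equality) (use SL_inverse[OF dA] dA in auto)
    have BA: "?B ** A = mat 1" using SL_inverse[OF dA] by blast
    have "\<forall>i j. \<exists>b. ?B$i$j = (mat 1 :: 'a^'n^'n)$i$j + ?t * b"
    proof (intro allI)
      fix i j
      have "(mat 1 :: 'a^'n^'n)$i$j = (?B ** A)$i$j" using BA by simp
      also have "\<dots> = (\<Sum>k\<in>UNIV. ?B$i$k * ((if k = j then 1 else 0) + ?t * Xof ?t A k j))"
        by (simp add: matrix_matrix_mult_def Xof[OF A] mat1_entry)
      also have "\<dots> = (\<Sum>k\<in>UNIV. (if k = j then ?B$i$k else 0) + ?t * (?B$i$k * Xof ?t A k j))"
        by (rule sum.cong) (auto simp: algebra_simps)
      also have "\<dots> = ?B$i$j + ?t * (\<Sum>k\<in>UNIV. ?B$i$k * Xof ?t A k j)"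
        by (simp add: sum.distrib sum_distrib_left)
      finally have "?B$i$j = (mat 1 :: 'a^'n^'n)$i$j + ?t * (- (\<Sum>k\<in>UNIV. ?B$i$k * Xof ?t A k j))"
        by (simp add: algebra_simps)
      then show "\<exists>b. ?B$i$j = (mat 1 :: 'a^'n^'n)$i$j + ?t * b" by blast
    qed
    then show "inv\<^bsub>SL\<^esub> A \<in> cong_sub p m" using SL_inverse[OF dA] by (simp add: inv cong_sub_iff)
  qed
qed


lemma group_fmg: "group (free_mod_group q V)"
  unfolding free_mod_group_def by (rule sum_group) simp

lemma carrier_fmg: "q \<noteq> 0 \<Longrightarrow> carrier (free_mod_group q V) =
   {g \<in> PiE V (\<lambda>_. {0..<int q}). finite {v\<in>V. g v \<noteq> 0}}"
  unfolding free_mod_group_def by (subst carrier_sum_group) (auto simp: carrier_integer_mod_group)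

lemma one_fmg: "one (free_mod_group q V) = (\<lambda>v\<in>V. 0)"
  unfolding free_mod_group_def by simp

lemma mult_fmg: "monoid.mult (free_mod_group q V) = (\<lambda>x y. \<lambda>v\<in>V. (x v + y v) mod int q)"
  unfolding free_mod_group_def by simp

locale cfg =
  fixes V :: "'a::comm_ring_1 set" and p r s :: nat and e :: "nat \<Rightarrow> 'n::finite \<times> 'n" and i0 :: 'n
  assumes ZB: "Z_basis V" and p0: "p \<noteq> 0" and sr: "s \<le> r"
    and ebij: "bij_betw e {..<CARD('n)^2 - 1} (UNIV - {(i0,i0)})"
begin

abbreviation "t \<equiv> (of_nat (p^r) :: 'a)"
abbreviation "q \<equiv> p^s"

definition red :: "('n \<times> 'n \<Rightarrow> 'a) \<Rightarrow> nat \<Rightarrow> 'a \<Rightarrow> int" where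
  "red Y = (\<lambda>k\<in>{..<CARD('n)^2 - 1}. \<lambda>v\<in>V. coef V (Y (e k)) v mod int q)"

definition phi :: "'a^'n^'n \<Rightarrow> nat \<Rightarrow> 'a \<Rightarrow> int" where
  "phi A = red (\<lambda>\<sigma>. Xof t A (fst \<sigma>) (snd \<sigma>))"

lemma q0: "q \<noteq> 0" using p0 by simp

lemma group_H: "group (sum_group {..<CARD('n)^2 - 1} (\<lambda>_. free_mod_group q V))"
  by (rule sum_group) (rule group_fmg)

lemma carrier_H: "carrier (sum_group {..<CARD('n)^2 - 1} (\<lambda>_. free_mod_group q V)) = PiE {..<CARD('n)^2 - 1} (\<lambda>_. carrier (free_mod_group q V))"
  by (subst carrier_sum_group) (auto intro: group_fmg)

lemma one_H: "one (sum_group {..<CARD('n)^2 - 1} (\<lambda>_. free_mod_group q V)) = (\<lambda>k\<in>{..<CARD('n)^2 - 1}. \<lambda>v\<in>V. 0)"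
  by (simp add: one_fmg)

lemma mult_H: "x \<otimes>\<^bsub>(sum_group {..<CARD('n)^2 - 1} (\<lambda>_. free_mod_group q V))\<^esub> y = (\<lambda>k\<in>{..<CARD('n)^2 - 1}. \<lambda>v\<in>V. (x k v + y k v) mod int q)"
  by (simp add: mult_fmg)

lemma red_carrier: "red Y \<in> carrier (sum_group {..<CARD('n)^2 - 1} (\<lambda>_. free_mod_group q V))"
proof -
  have "(\<lambda>v\<in>V. coef V (Y (e k)) v mod int q) \<in> carrier (free_mod_group q V)" for k
  proof -
    have fin: "finite {v\<in>V. (\<lambda>v\<in>V. coef V (Y (e k)) v mod int q) v \<noteq> 0}"
      by (rule finite_subset[OF _ coef_subset(2)[OF ZB, of "Y (e k)"]]) auto
    have "(\<lambda>v\<in>V. coef V (Y (e k)) v mod int q) \<in> PiE V (\<lambda>_. {0..<int q})"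
      using q0 by auto
    then show ?thesis using fin unfolding carrier_fmg[OF q0] by blast
  qed
  then show ?thesis
    unfolding carrier_H red_def by auto
qed

lemma red_add:
  "red (\<lambda>\<sigma>. Y1 \<sigma> + Y2 \<sigma> + t * Z \<sigma>) = red Y1 \<otimes>\<^bsub>(sum_group {..<CARD('n)^2 - 1} (\<lambda>_. free_mod_group q V))\<^esub> red Y2"
proof -
  have dv: "int q dvd int (p^r)" using sr by (simp add: le_imp_power_dvd)
  have "coef V (Y1 (e k) + Y2 (e k) + t * Z (e k)) v mod int q =
        (coef V (Y1 (e k)) v mod int q + coef V (Y2 (e k)) v mod int q) mod int q" for k v
  proof -
    have "coef V (Y1 (e k) + Y2 (e k) + t * Z (e k)) v =
          coef V (Y1 (e k)) v + coef V (Y2 (e k)) v + int (p^r) * coef V (Z (e k)) v"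
      using coef_add[OF ZB] coef_nat_mult[OF ZB, of "p^r" "Z (e k)" v] by simp
    moreover have "(int (p^r) * coef V (Z (e k)) v) mod int q = 0" using dv by simp
    ultimately show ?thesis
    proof -
      fix a b c :: int
      have "\<And>a b c. c mod int q = 0 \<Longrightarrow> (a + b + c) mod int q = (a mod int q + b mod int q) mod int q"
      proof -
        fix a b c :: int assume c: "c mod int q = 0"
        have "(a + b + c) mod int q = (a + b + c mod int q) mod int q" by (rule mod_add_right_eq[symmetric])
        also have "\<dots> = (a + b) mod int q" using c by simp
        also have "\<dots> = (a mod int q + b mod int q) mod int q" by (rule mod_add_eq[symmetric])
        finally show "(a + b + c) mod int q = (a mod int q + b mod int q) mod int q" .
      qed
      then show ?thesis using \<open>(int (p^r) * coef V (Z (e k)) v) mod int q = 0\<close>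
        \<open>coef V (Y1 (e k) + Y2 (e k) + t * Z (e k)) v =
          coef V (Y1 (e k)) v + coef V (Y2 (e k)) v + int (p^r) * coef V (Z (e k)) v\<close> by metis
    qed
  qed
  then show ?thesis unfolding mult_H red_def by (intro ext) (simp add: red_def)
qed

lemma red_add2: "red (\<lambda>\<sigma>. Y1 \<sigma> + Y2 \<sigma>) = red Y1 \<otimes>\<^bsub>(sum_group {..<CARD('n)^2 - 1} (\<lambda>_. free_mod_group q V))\<^esub> red Y2"
  using red_add[of Y1 Y2 "\<lambda>_. 0"] by simp

lemma red_zero: "red (\<lambda>_. 0) = one (sum_group {..<CARD('n)^2 - 1} (\<lambda>_. free_mod_group q V))"
  unfolding one_H red_def by (simp add: coef_zero[OF ZB])

lemma e_in: "k \<in> {..<CARD('n)^2 - 1} \<Longrightarrow> e k \<noteq> (i0, i0)"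
  using ebij by (auto simp: bij_betw_def)

lemma red_cong: "(\<And>\<sigma>. \<sigma> \<noteq> (i0,i0) \<Longrightarrow> Y \<sigma> = Y' \<sigma>) \<Longrightarrow> red Y = red Y'"
  unfolding red_def using e_in by (auto simp: fun_eq_iff)

lemma Xof_r: "A \<in> cong_sub p r \<Longrightarrow> A$i$j = (mat 1 :: 'a^'n^'n)$i$j + t * Xof t A i j"
  by (rule Xof)

lemma Xof_r_unique: "A$i$j = (mat 1 :: 'a^'n^'n)$i$j + t * b \<Longrightarrow> Xof t A i j = b"
  by (rule Xof_unique[OF ZB p0])

lemma phi_of:
  assumes "\<And>a b. A$a$b = (mat 1 :: 'a^'n^'n)$a$b + t * W (a,b)"
  shows "phi A = red W"
proof -
  have "(\<lambda>\<sigma>. Xof t A (fst \<sigma>) (snd \<sigma>)) = W"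
    using Xof_r_unique[OF assms] by (auto simp: fun_eq_iff)
  then show ?thesis unfolding phi_def by simp
qed

lemma phi_mult:
  assumes A: "A \<in> cong_sub p r" and B: "B \<in> cong_sub p r"
  shows "phi (A ** B) = phi A \<otimes>\<^bsub>(sum_group {..<CARD('n)^2 - 1} (\<lambda>_. free_mod_group q V))\<^esub> phi B"
proof -
  let ?XA = "Xof t A" and ?XB = "Xof t B"
  have "phi (A ** B) = red (\<lambda>\<sigma>. ?XA (fst \<sigma>) (snd \<sigma>) + ?XB (fst \<sigma>) (snd \<sigma>) +
      t * (\<Sum>k\<in>UNIV. ?XA (fst \<sigma>) k * ?XB k (snd \<sigma>)))"
    by (rule phi_of) (simp add: mult_pert[OF Xof_r[OF A] Xof_r[OF B]])
  also have "\<dots> = phi A \<otimes>\<^bsub>(sum_group {..<CARD('n)^2 - 1} (\<lambda>_. free_mod_group q V))\<^esub> phi B"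
    unfolding phi_def by (rule red_add)
  finally show ?thesis .
qed

lemma group_G: "group ((SL :: ('a^'n^'n) monoid)\<lparr>carrier := cong_sub p r\<rparr>)"
  by (rule group.subgroup_imp_group[OF group_SL subgroup_cong_sub])

lemma phi_hom: "group_hom ((SL :: ('a^'n^'n) monoid)\<lparr>carrier := cong_sub p r\<rparr>)
   (sum_group {..<CARD('n)^2 - 1} (\<lambda>_. free_mod_group q V)) phi"
  unfolding group_hom_def group_hom_axioms_def
proof (intro conjI group_G group_H)
  show "phi \<in> hom ((SL :: ('a^'n^'n) monoid)\<lparr>carrier := cong_sub p r\<rparr>)
   (sum_group {..<CARD('n)^2 - 1} (\<lambda>_. free_mod_group q V))"
    unfolding hom_def using red_carrier phi_mult by (auto simp: phi_def)
qed

lemma e_onto: "\<sigma> \<noteq> (i0,i0) \<Longrightarrow> \<exists>k\<in>{..<CARD('n)^2 - 1}. \<sigma> = e k"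
proof -
  assume a: "\<sigma> \<noteq> (i0,i0)"
  have "e ` {..<CARD('n)^2 - 1} = UNIV - {(i0,i0)}" using ebij by (simp add: bij_betw_def)
  then have "\<sigma> \<in> e ` {..<CARD('n)^2 - 1}" using a by simp
  then show ?thesis by blast
qed

lemma restrict2_eq0:
  "((\<lambda>k\<in>I. \<lambda>v\<in>V. f k v) = (\<lambda>k\<in>I. \<lambda>v\<in>V. (0::int))) \<longleftrightarrow> (\<forall>k\<in>I. \<forall>v\<in>V. f k v = 0)"
proof
  assume h: "(\<lambda>k\<in>I. \<lambda>v\<in>V. f k v) = (\<lambda>k\<in>I. \<lambda>v\<in>V. (0::int))"
  show "\<forall>k\<in>I. \<forall>v\<in>V. f k v = 0"
  proof (intro ballI)
    fix k v assume "k \<in> I" "v \<in> V"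
    have "(\<lambda>k\<in>I. \<lambda>v\<in>V. f k v) k v = (\<lambda>k\<in>I. \<lambda>v\<in>V. (0::int)) k v" using h by simp
    then show "f k v = 0" using \<open>k \<in> I\<close> \<open>v \<in> V\<close> by simp
  qed
next
  assume "\<forall>k\<in>I. \<forall>v\<in>V. f k v = 0"
  then show "(\<lambda>k\<in>I. \<lambda>v\<in>V. f k v) = (\<lambda>k\<in>I. \<lambda>v\<in>V. (0::int))"
    by (auto simp: fun_eq_iff)
qed

lemma coef_outside: "v \<notin> V \<Longrightarrow> coef V x v = 0"
  by (simp add: coef_def)

lemma red_one_iff:
  "red Y = one (sum_group {..<CARD('n)^2 - 1} (\<lambda>_. free_mod_group q V)) \<longleftrightarrow>
   (\<forall>\<sigma>. \<sigma> \<noteq> (i0,i0) \<longrightarrow> (\<exists>b. Y \<sigma> = of_nat q * b))"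
proof -
  have "red Y = one (sum_group {..<CARD('n)^2 - 1} (\<lambda>_. free_mod_group q V)) \<longleftrightarrow>
     (\<forall>k\<in>{..<CARD('n)^2 - 1}. \<forall>v\<in>V. coef V (Y (e k)) v mod int q = 0)"
    unfolding red_def one_H by (rule restrict2_eq0)
  also have "\<dots> \<longleftrightarrow> (\<forall>k\<in>{..<CARD('n)^2 - 1}. \<forall>v. int q dvd coef V (Y (e k)) v)"
  proof -
    have aux: "\<And>x. (\<forall>v\<in>V. coef V x v mod int q = 0) \<longleftrightarrow> (\<forall>v. int q dvd coef V x v)"
      by (metis coef_outside dvd_0_right dvd_eq_mod_eq_0)
    show ?thesis by (simp only: aux)
  qed
  also have "\<dots> \<longleftrightarrow> (\<forall>k\<in>{..<CARD('n)^2 - 1}. \<exists>b. Y (e k) = of_nat q * b)"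
    by (simp only: div_iff[OF ZB])
  also have "\<dots> \<longleftrightarrow> (\<forall>\<sigma>. \<sigma> \<noteq> (i0,i0) \<longrightarrow> (\<exists>b. Y \<sigma> = of_nat q * b))"
  proof
    assume h: "\<forall>k\<in>{..<CARD('n)^2 - 1}. \<exists>b. Y (e k) = of_nat q * b"
    show "\<forall>\<sigma>. \<sigma> \<noteq> (i0,i0) \<longrightarrow> (\<exists>b. Y \<sigma> = of_nat q * b)"
    proof (intro allI impI)
      fix \<sigma> :: "'n \<times> 'n" assume "\<sigma> \<noteq> (i0,i0)"
      then obtain k where "k \<in> {..<CARD('n)^2 - 1}" "\<sigma> = e k" using e_onto by blast
      then show "\<exists>b. Y \<sigma> = of_nat q * b" using h by blast
    qed
  next
    assume h: "\<forall>\<sigma>. \<sigma> \<noteq> (i0,i0) \<longrightarrow> (\<exists>b. Y \<sigma> = of_nat q * b)"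
    show "\<forall>k\<in>{..<CARD('n)^2 - 1}. \<exists>b. Y (e k) = of_nat q * b"
    proof
      fix k assume "k \<in> {..<CARD('n)^2 - 1}"
      then have "e k \<noteq> (i0,i0)" by (rule e_in)
      then show "\<exists>b. Y (e k) = of_nat q * b" using h by blast
    qed
  qed
  finally show ?thesis .
qed

lemma kernel_phi:
  "kernel ((SL :: ('a^'n^'n) monoid)\<lparr>carrier := cong_sub p r\<rparr>)
     (sum_group {..<CARD('n)^2 - 1} (\<lambda>_. free_mod_group q V)) phi = cong_sub p (r + s)"
proof (rule Set.set_eqI, rule iffI)
  fix A :: "'a^'n^'n"
  assume "A \<in> kernel ((SL :: ('a^'n^'n) monoid)\<lparr>carrier := cong_sub p r\<rparr>)
     (sum_group {..<CARD('n)^2 - 1} (\<lambda>_. free_mod_group q V)) phi"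
  then have A: "A \<in> cong_sub p r" and ph: "phi A = one (sum_group {..<CARD('n)^2 - 1} (\<lambda>_. free_mod_group q V))"
    by (auto simp: kernel_def)
  let ?X = "Xof t A"
  have dA: "det A = 1" using A by (simp add: cong_sub_iff)
  have "\<forall>\<sigma>. \<sigma> \<noteq> (i0,i0) \<longrightarrow> (\<exists>b. ?X (fst \<sigma>) (snd \<sigma>) = of_nat q * b)"
    using ph unfolding phi_def red_one_iff by simp
  then obtain bf where bf: "\<And>\<sigma>. \<sigma> \<noteq> (i0,i0) \<Longrightarrow> ?X (fst \<sigma>) (snd \<sigma>) = of_nat q * bf \<sigma>"
    by metis
  define x where "x = ?X i0 i0"
  define M :: "'a^'n^'n" where "M = (\<chi> i j. if i = j then (if i = i0 then 1 + t * x else 1) else 0)"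
  define N :: "'a^'n^'n" where "N = (\<chi> i j. if (i,j) = (i0,i0) then 0 else bf (i,j))"
  have AMN: "A$i$j = M$i$j + (t * of_nat q) * N$i$j" for i j
  proof (cases "(i,j) = (i0,i0)")
    case True
    then show ?thesis using Xof_r[OF A, of i0 i0] by (simp add: M_def N_def x_def mat1_entry)
  next
    case False
    then show ?thesis using Xof_r[OF A, of i j] bf[of "(i,j)"]
      by (auto simp: M_def N_def mat1_entry)
  qed
  obtain c where c: "det A = det M + (t * of_nat q) * c"
    using det_pert[of A M "t * of_nat q" N] AMN by blast
  have "det M = (\<Prod>i\<in>UNIV. M$i$i)" by (rule det_diagonal) (simp add: M_def)
  also have "\<dots> = (\<Prod>i\<in>UNIV. if i = i0 then 1 + t * x else 1)"
    by (rule prod.cong) (auto simp: M_def)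
  also have "\<dots> = 1 + t * x" by simp
  finally have "1 = 1 + t * x + (t * of_nat q) * c" using c dA by simp
  then have "of_nat (p^r) * (x + of_nat q * c) = (0::'a)" by (simp add: algebra_simps)
  then have "x + of_nat q * c = 0" using torsion_free[OF ZB, of "p^r" "x + of_nat q * c"] p0 by simp
  then have "x = - (of_nat q * c)" by (simp only: eq_neg_iff_add_eq_0)
  then have xq: "x = of_nat q * (- c)" by (simp only: mult_minus_right)
  have "\<forall>i j. \<exists>b. A$i$j = (mat 1 :: 'a^'n^'n)$i$j + of_nat (p^(r+s)) * b"
  proof (intro allI)
    fix i j
    have pe: "(of_nat (p^(r+s)) :: 'a) = t * of_nat q" by (simp add: power_add)
    show "\<exists>b. A$i$j = (mat 1 :: 'a^'n^'n)$i$j + of_nat (p^(r+s)) * b"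
    proof (cases "(i,j) = (i0,i0)")
      case True
      then have "A$i$j = (mat 1 :: 'a^'n^'n)$i$j + of_nat (p^(r+s)) * (- c)"
        using Xof_r[OF A, of i0 i0] xq unfolding pe x_def by (simp add: mult.assoc)
      then show ?thesis by blast
    next
      case False
      then have "A$i$j = (mat 1 :: 'a^'n^'n)$i$j + of_nat (p^(r+s)) * bf (i,j)"
        using Xof_r[OF A, of i j] bf[of "(i,j)"] unfolding pe by (simp add: mult.assoc)
      then show ?thesis by blast
    qed
  qed
  then show "A \<in> cong_sub p (r + s)" using dA by (simp add: cong_sub_iff)
next
  fix A :: "'a^'n^'n"
  assume A: "A \<in> cong_sub p (r + s)"
  have dA: "det A = 1" using A by (simp add: cong_sub_iff)
  have pe: "(of_nat (p^(r+s)) :: 'a) = t * of_nat q" by (simp add: power_add)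
  have "\<forall>i j. \<exists>b. A$i$j = (mat 1 :: 'a^'n^'n)$i$j + of_nat (p^(r+s)) * b"
    using A by (simp add: cong_sub_iff)
  then obtain bf where bf: "\<And>i j. A$i$j = (mat 1 :: 'a^'n^'n)$i$j + of_nat (p^(r+s)) * bf i j"
    by metis
  have bf': "A$i$j = (mat 1 :: 'a^'n^'n)$i$j + t * (of_nat q * bf i j)" for i j
    using bf[of i j] unfolding pe by (simp add: mult.assoc)
  have Ar: "A \<in> cong_sub p r"
    using bf' dA by (auto simp: cong_sub_iff)
  have "phi A = red (\<lambda>\<sigma>. of_nat q * bf (fst \<sigma>) (snd \<sigma>))"
    by (rule phi_of) (simp add: bf')
  also have "\<dots> = one (sum_group {..<CARD('n)^2 - 1} (\<lambda>_. free_mod_group q V))"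
    unfolding red_one_iff by blast
  finally show "A \<in> kernel ((SL :: ('a^'n^'n) monoid)\<lparr>carrier := cong_sub p r\<rparr>)
     (sum_group {..<CARD('n)^2 - 1} (\<lambda>_. free_mod_group q V)) phi"
    using Ar by (simp add: kernel_def)
qed

definition reach :: "('n \<times> 'n \<Rightarrow> 'a) \<Rightarrow> bool" where
  "reach Y \<longleftrightarrow> (\<exists>A\<in>cong_sub p r. phi A = red Y)"

lemma cong_r_mult: "A \<in> cong_sub p r \<Longrightarrow> B \<in> cong_sub p r \<Longrightarrow> A ** B \<in> (cong_sub p r :: ('a^'n^'n) set)"
proof -
  assume "A \<in> cong_sub p r" "B \<in> cong_sub p r"
  then have "A \<otimes>\<^bsub>(SL :: ('a^'n^'n) monoid)\<^esub> B \<in> cong_sub p r"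
    by (rule subgroup.m_closed[OF subgroup_cong_sub])
  then show ?thesis by simp
qed

lemma reach_add: "reach Y1 \<Longrightarrow> reach Y2 \<Longrightarrow> reach (\<lambda>\<tau>. Y1 \<tau> + Y2 \<tau>)"
  unfolding reach_def
proof -
  assume "\<exists>A\<in>cong_sub p r. phi A = red Y1" "\<exists>A\<in>cong_sub p r. phi A = red Y2"
  then obtain A B where A: "A \<in> cong_sub p r" "phi A = red Y1" and B: "B \<in> cong_sub p r" "phi B = red Y2"
    by blast
  have "phi (A ** B) = red (\<lambda>\<tau>. Y1 \<tau> + Y2 \<tau>)"
    using phi_mult[OF A(1) B(1)] A(2) B(2) red_add2 by simp
  then show "\<exists>A\<in>cong_sub p r. phi A = red (\<lambda>\<tau>. Y1 \<tau> + Y2 \<tau>)"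
    using cong_r_mult[OF A(1) B(1)] by blast
qed

lemma reach_cong: "reach Y \<Longrightarrow> (\<And>\<tau>. \<tau> \<noteq> (i0,i0) \<Longrightarrow> Y \<tau> = Y' \<tau>) \<Longrightarrow> reach Y'"
  unfolding reach_def using red_cong by metis

lemma mat1_cong: "(mat 1 :: 'a^'n^'n) \<in> cong_sub p r"
  by (simp add: cong_sub_iff) (metis add.right_neutral mult_zero_right)

lemma reach_zero: "reach (\<lambda>_. 0)"
proof -
  have "phi (mat 1) = red (\<lambda>_. 0)" by (rule phi_of) simp
  then show ?thesis unfolding reach_def using mat1_cong by blast
qed

lemma reach_corner: "reach (\<lambda>\<tau>. if \<tau> = (i0,i0) then x else 0)"
  by (rule reach_cong[OF reach_zero]) simp

lemma reach_mat:
  fixes A :: "'a^'n^'n"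
  assumes "det A = 1" "\<And>a b. A$a$b = (mat 1 :: 'a^'n^'n)$a$b + t * W (a,b)"
  shows "reach W"
proof -
  have "A \<in> cong_sub p r" using assms by (auto simp: cong_sub_iff)
  moreover have "phi A = red W" by (rule phi_of) (rule assms(2))
  ultimately show ?thesis unfolding reach_def by blast
qed

lemma reach_off:
  assumes ij: "i \<noteq> j"
  shows "reach (\<lambda>\<tau>. if \<tau> = (i,j) then x else 0)"
proof -
  define A :: "'a^'n^'n" where "A = (\<chi> a b. (mat 1 :: 'a^'n^'n)$a$b + t * (if (a,b) = (i,j) then x else 0))"
  have "A = (\<chi> l. if l = i then row i (mat 1) + (t * x) *s row j (mat 1) else row l (mat 1))"
    using ij by (auto simp: vec_eq_iff A_def row_def mat1_entry vector_scalar_mult_def)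
  then have "det A = 1" using det_row_operation[OF ij, of "mat 1" "t * x"] by simp
  moreover have "A$a$b = (mat 1 :: 'a^'n^'n)$a$b + t * (\<lambda>\<tau>. if \<tau> = (i,j) then x else 0) (a,b)" for a b
    by (simp add: A_def)
  ultimately show ?thesis by (rule reach_mat)
qed

lemma reach_diag:
  assumes ii: "i \<noteq> i0"
  shows "reach (\<lambda>\<tau>. if \<tau> = (i,i) then x else 0)"
proof -
  define W where "W = (\<lambda>(u,w). if u = i \<and> w = i then x else if u = i \<and> w = i0 then x
      else if u = i0 \<and> w = i then - x else if u = i0 \<and> w = i0 then - x else (0::'a))"
  define B :: "'a^'n^'n" where "B = (\<chi> u w. (mat 1 :: 'a^'n^'n)$u$w + t * W (u,w))"
  define B1 :: "'a^'n^'n" where "B1 = (\<chi> l. if l = i0 then row i0 B + 1 *s row i B else row l B)"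
  define B2 :: "'a^'n^'n" where "B2 = (\<chi> l. if l = i then row i B1 + (- (t * x)) *s row i0 B1 else row l B1)"
  define B3 :: "'a^'n^'n" where "B3 = (\<chi> l. if l = i0 then row i0 B2 + (- 1) *s row i B2 else row l B2)"
  have d1: "det B1 = det B" unfolding B1_def by (rule det_row_operation) (use ii in simp)
  have d2: "det B2 = det B1" unfolding B2_def by (rule det_row_operation) (use ii in simp)
  have d3: "det B3 = det B2" unfolding B3_def by (rule det_row_operation) (use ii in simp)
  have B1e: "B1$u$w = (if u = i0 then (if w = i \<or> w = i0 then 1 else 0) else B$u$w)" for u w
    using ii by (auto simp: B1_def B_def W_def row_def vector_scalar_mult_def mat1_entry algebra_simps)
  have B2e: "B2$u$w = (if u = i then (if w = i then 1 else 0) else B1$u$w)" for u w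
    using ii by (auto simp: B2_def B1e B_def W_def row_def vector_scalar_mult_def mat1_entry algebra_simps)
  have "B3 = mat 1"
    using ii by (auto simp: vec_eq_iff B3_def B2e B1e B_def W_def row_def vector_scalar_mult_def mat1_entry)
  then have dB: "det B = 1" using d1 d2 d3 by simp
  have rB: "reach W" by (rule reach_mat[OF dB]) (simp add: B_def)
  have r1: "reach (\<lambda>\<tau>. if \<tau> = (i,i0) then - x else 0)" by (rule reach_off[OF ii])
  have r2: "reach (\<lambda>\<tau>. if \<tau> = (i0,i) then x else 0)" by (rule reach_off) (use ii in auto)
  have "reach (\<lambda>\<tau>. (W \<tau> + (if \<tau> = (i,i0) then - x else 0)) + (if \<tau> = (i0,i) then x else 0))"
    by (rule reach_add[OF reach_add[OF rB r1] r2])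
  then show ?thesis
  proof (rule reach_cong)
    fix \<tau> :: "'n \<times> 'n" assume nt: "\<tau> \<noteq> (i0,i0)"
    obtain a b where tb: "\<tau> = (a,b)" by (cases \<tau>)
    show "W \<tau> + (if \<tau> = (i,i0) then - x else 0) + (if \<tau> = (i0,i) then x else 0) =
          (if \<tau> = (i,i) then x else 0)"
      using ii nt unfolding tb
      by (cases "a = i"; cases "b = i"; cases "a = i0"; cases "b = i0") (simp_all add: W_def)
  qed
qed

lemma reach_single: "reach (\<lambda>\<tau>. if \<tau> = \<sigma> then x else 0)"
proof -
  obtain i j where s: "\<sigma> = (i,j)" by (cases \<sigma>)
  show ?thesis
  proof (cases "i = j")
    case False then show ?thesis using reach_off s by simp
  next
    case True
    show ?thesis
    proof (cases "i = i0")
      case True then show ?thesis using reach_corner s \<open>i = j\<close> by simp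
    next
      case False then show ?thesis using reach_diag s \<open>i = j\<close> by simp
    qed
  qed
qed

lemma reach_fin: "finite T \<Longrightarrow> reach (\<lambda>\<tau>. if \<tau> \<in> T then Y \<tau> else 0)"
proof (induction T rule: finite_induct)
  case empty then show ?case using reach_zero by simp
next
  case (insert \<sigma> T)
  have "reach (\<lambda>\<tau>. (if \<tau> \<in> T then Y \<tau> else 0) + (if \<tau> = \<sigma> then Y \<sigma> else 0))"
    by (rule reach_add[OF insert.IH reach_single])
  moreover have "(\<lambda>\<tau>. (if \<tau> \<in> T then Y \<tau> else 0) + (if \<tau> = \<sigma> then Y \<sigma> else 0)) =
      (\<lambda>\<tau>. if \<tau> \<in> insert \<sigma> T then Y \<tau> else 0)"
    using insert.hyps by (auto simp: fun_eq_iff)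
  ultimately show ?case by simp
qed

lemma reach_all: "reach Y"
  using reach_fin[of UNIV Y] by simp

lemma phi_onto: "phi ` cong_sub p r = carrier (sum_group {..<CARD('n)^2 - 1} (\<lambda>_. free_mod_group q V))"
proof
  show "phi ` cong_sub p r \<subseteq> carrier (sum_group {..<CARD('n)^2 - 1} (\<lambda>_. free_mod_group q V))"
    using red_carrier by (auto simp: phi_def)
next
  show "carrier (sum_group {..<CARD('n)^2 - 1} (\<lambda>_. free_mod_group q V)) \<subseteq> phi ` cong_sub p r"
  proof
    fix y assume y: "y \<in> carrier (sum_group {..<CARD('n)^2 - 1} (\<lambda>_. free_mod_group q V))"
    have yk: "y k \<in> PiE V (\<lambda>_. {0..<int q}) \<and> finite {v\<in>V. y k v \<noteq> 0}" if "k \<in> {..<CARD('n)^2 - 1}" for k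
      using y that unfolding carrier_H carrier_fmg[OF q0] by auto
    have yext: "y k = undefined" if "k \<notin> {..<CARD('n)^2 - 1}" for k
      using y that unfolding carrier_H by auto
    define Y where "Y \<sigma> = (let k = inv_into {..<CARD('n)^2 - 1} e \<sigma> in
       (\<Sum>v\<in>{v\<in>V. y k v \<noteq> 0}. of_int (y k v) * v))" for \<sigma>
    have inj: "inj_on e {..<CARD('n)^2 - 1}" using ebij by (simp add: bij_betw_def)
    have "red Y = y"
    proof (rule ext)
      fix k
      show "red Y k = y k"
      proof (cases "k \<in> {..<CARD('n)^2 - 1}")
        case False then show ?thesis using yext[OF False] by (simp add: red_def)
      next
        case True
        have Ye: "Y (e k) = (\<Sum>v\<in>{v\<in>V. y k v \<noteq> 0}. of_int (y k v) * v)"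
          unfolding Y_def using inv_into_f_f[OF inj True] by simp
        show ?thesis
        proof (rule ext)
          fix v
          show "red Y k v = y k v"
          proof (cases "v \<in> V")
            case False
            then show ?thesis using yk[OF True] True by (auto simp: red_def PiE_def extensional_def)
          next
            case vV: True
            have "coef V (Y (e k)) v = (if v \<in> {v\<in>V. y k v \<noteq> 0} then y k v else 0)"
              unfolding Ye by (rule coef_unique[OF ZB]) (use yk[OF True] in auto)
            also have "\<dots> = y k v" using vV by auto
            finally have c: "coef V (Y (e k)) v = y k v" .
            have "y k v \<in> {0..<int q}" using yk[OF True] vV by (auto simp: PiE_def Pi_def)
            then have "y k v mod int q = y k v" by (simp add: mod_pos_pos_trivial)
            then show ?thesis using True vV c by (simp add: red_def)
          qed
        qed
      qed
    qed
    moreover obtain A where "A \<in> cong_sub p r" "phi A = red Y"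
      using reach_all unfolding reach_def by blast
    ultimately show "y \<in> phi ` cong_sub p r" by (metis image_eqI)
  qed
qed

theorem main_iso:
  "((SL :: ('a^'n^'n) monoid)\<lparr>carrier := cong_sub p r\<rparr>) Mod (cong_sub p (r + s) :: ('a^'n^'n) set)
           \<cong> sum_group {..<CARD('n)^2 - 1} (\<lambda>_. free_mod_group (p^s) V)"
proof -
  interpret gh: group_hom "(SL :: ('a^'n^'n) monoid)\<lparr>carrier := cong_sub p r\<rparr>"
    "sum_group {..<CARD('n)^2 - 1} (\<lambda>_. free_mod_group q V)" phi
    by (rule phi_hom)
  have "phi ` carrier ((SL :: ('a^'n^'n) monoid)\<lparr>carrier := cong_sub p r\<rparr>) =
        carrier (sum_group {..<CARD('n)^2 - 1} (\<lambda>_. free_mod_group q V))"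
    using phi_onto by simp
  from gh.FactGroup_iso[OF this] show ?thesis unfolding kernel_phi .
qed

end


theorem theorem3p5:
  fixes V :: "'a::comm_ring_1 set" and p r s :: nat
  assumes "Z_basis V"
    and "CARD('n::finite) \<ge> 2"
    and "prime p"
    and "finite V \<or> s = 1"
    and "1 \<le> s" and "s \<le> r"
  shows "((SL :: ('a^'n^'n) monoid)\<lparr>carrier := cong_sub p r\<rparr>) Mod (cong_sub p (r + s) :: ('a^'n^'n) set)
           \<cong> sum_group {..<CARD('n)^2 - 1} (\<lambda>_. free_mod_group (p^s) V)"
proof -
  define i0 :: 'n where "i0 = undefined"
  let ?S = "UNIV - {(i0,i0)} :: ('n \<times> 'n) set"
  have cS: "card ?S = CARD('n)^2 - 1"
  proof -
    have "card (UNIV :: ('n \<times> 'n) set) = CARD('n) * CARD('n)"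
      by (simp add: UNIV_Times_UNIV[symmetric] card_cartesian_product del: UNIV_Times_UNIV)
    then show ?thesis by (simp add: card_Diff_singleton power2_eq_square)
  qed
  obtain e where "bij_betw e {0..<card ?S} ?S"
    using ex_bij_betw_nat_finite[of ?S] by auto
  then have eb: "bij_betw e {..<CARD('n)^2 - 1} ?S" using cS by (simp add: atLeast0LessThan)
  have p0: "p \<noteq> 0" using assms(3) by auto
  interpret cfg V p r s e i0
    by unfold_locales (use assms p0 eb in auto)
  show ?thesis by (rule main_iso)
qed

end
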